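(* Let $n=p^{\alpha}$ where $p$ is a prime and $\alpha\geq 1$ is an integer. Then $\mathbb{AG}(\mathbb{Z}_n)$ is perfect.
   Context: For a commutative ring $R$ with unity, the annihilating-ideal graph $\mathbb{AG}(R)$ is the simple graph whose vertex set is the set of all non-zero ideals of $R$ with non-zero annihilator, two distinct vertices $I,J$ being adjacent if and only if $IJ=0$. A graph $G$ is perfect if $\omega(H)=\chi(H)$ for every induced subgraph $H$ of $G$. *)

theory Defs
  imports "HOL-Algebra.Ideal_Product" "HOL-Number_Theory.Residues"
begin

definition is_clique :: "('v \<Rightarrow> 'v \<Rightarrow> bool) \<Rightarrow> 'v set \<Rightarrow> bool" where
  "is_clique E C \<longleftrightarrow> (\<forall>x\<in>C. \<forall>y\<in>C. x \<noteq> y \<longrightarrow> E x y)"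

text \<open>Clique number of the graph with vertex set V (assumed finite).\<close>
definition clique_number :: "'v set \<Rightarrow> ('v \<Rightarrow> 'v \<Rightarrow> bool) \<Rightarrow> nat" where
  "clique_number V E = Max (card ` {C. C \<subseteq> V \<and> is_clique E C})"

definition is_colouring :: "'v set \<Rightarrow> ('v \<Rightarrow> 'v \<Rightarrow> bool) \<Rightarrow> nat \<Rightarrow> ('v \<Rightarrow> nat) \<Rightarrow> bool" where
  "is_colouring V E k f \<longleftrightarrow> f ` V \<subseteq> {..<k} \<and>
     (\<forall>x\<in>V. \<forall>y\<in>V. x \<noteq> y \<longrightarrow> E x y \<longrightarrow> f x \<noteq> f y)"

definition chromatic_number :: "'v set \<Rightarrow> ('v \<Rightarrow> 'v \<Rightarrow> bool) \<Rightarrow> nat" where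
  "chromatic_number V E = (LEAST k. \<exists>f. is_colouring V E k f)"

definition perfect_graph :: "'v set \<Rightarrow> ('v \<Rightarrow> 'v \<Rightarrow> bool) \<Rightarrow> bool" where
  "perfect_graph V E \<longleftrightarrow> (\<forall>S. S \<subseteq> V \<longrightarrow> clique_number S E = chromatic_number S E)"

definition annihilator :: "('a, 'b) ring_scheme \<Rightarrow> 'a set \<Rightarrow> 'a set" where
  "annihilator R I = {x \<in> carrier R. \<forall>i\<in>I. x \<otimes>\<^bsub>R\<^esub> i = \<zero>\<^bsub>R\<^esub>}"

definition AG_vertices :: "('a, 'b) ring_scheme \<Rightarrow> 'a set set" where
  "AG_vertices R = {I. ideal I R \<and> I \<noteq> {\<zero>\<^bsub>R\<^esub>} \<and> annihilator R I \<noteq> {\<zero>\<^bsub>R\<^esub>}}"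

definition AG_adj :: "('a, 'b) ring_scheme \<Rightarrow> 'a set \<Rightarrow> 'a set \<Rightarrow> bool" where
  "AG_adj R I J \<longleftrightarrow> I \<noteq> J \<and> ideal_prod R I J = {\<zero>\<^bsub>R\<^esub>}"

end

theory Submission
  imports Defs
begin

lemma clique_le_colours:
  assumes "is_colouring S E k f" "C \<subseteq> S" "is_clique E C" "finite C"
  shows "card C \<le> k"
proof -
  have inj: "inj_on f C"
    using assms unfolding is_colouring_def is_clique_def inj_on_def by blast
  have "f ` C \<subseteq> {..<k}" using assms unfolding is_colouring_def by blast
  hence "card (f ` C) \<le> k" by (metis card_lessThan card_mono finite_lessThan)
  thus ?thesis using card_image[OF inj] by simp
qed

lemma clique_eq_chrom:
  assumes "finite S" "is_colouring S E k f" "C \<subseteq> S" "is_clique E C" "card C = k"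
  shows "clique_number S E = chromatic_number S E"
proof -
  have fin: "finite {C. C \<subseteq> S \<and> is_clique E C}" using assms(1) by auto
  have "clique_number S E = k"
    unfolding clique_number_def
  proof (rule Max_eqI)
    show "finite (card ` {C. C \<subseteq> S \<and> is_clique E C})" using fin by auto
    show "k \<in> card ` {C. C \<subseteq> S \<and> is_clique E C}" using assms by auto
    fix y assume "y \<in> card ` {C. C \<subseteq> S \<and> is_clique E C}"
    then obtain C' where "C' \<subseteq> S" "is_clique E C'" "y = card C'" by auto
    thus "y \<le> k" using clique_le_colours[OF assms(2)] assms(1) finite_subset by blast
  qed
  moreover have "chromatic_number S E = k"
    unfolding chromatic_number_def
  proof (rule Least_equality)
    show "\<exists>f. is_colouring S E k f" using assms by blast
    fix y assume "\<exists>f. is_colouring S E y f"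
    then obtain g where "is_colouring S E y g" by blast
    thus "k \<le> y" using clique_le_colours[of S E y g C] assms finite_subset by metis
  qed
  ultimately show ?thesis by simp
qed

lemma threshold_perfect:
  fixes S :: "'a set set"
  assumes fin: "finite S"
    and tot: "\<And>x y. x \<in> S \<Longrightarrow> y \<in> S \<Longrightarrow> x \<subseteq> y \<or> y \<subseteq> x"
    and sym: "\<And>x y. x \<in> S \<Longrightarrow> y \<in> S \<Longrightarrow> Z x y \<Longrightarrow> Z y x"
    and mono: "\<And>x y x' y'. x \<in> S \<Longrightarrow> y \<in> S \<Longrightarrow> x' \<in> S \<Longrightarrow> y' \<in> S \<Longrightarrow>
                 x \<subseteq> x' \<Longrightarrow> y \<subseteq> y' \<Longrightarrow> Z x' y' \<Longrightarrow> Z x y"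
    and E: "\<And>x y. E x y \<longleftrightarrow> x \<noteq> y \<and> Z x y"
  shows "clique_number S E = chromatic_number S E"
proof -
  define B where "B = {x\<in>S. Z x x}"
  have BS: "B \<subseteq> S" unfolding B_def by auto
  have finB: "finite B" using fin BS finite_subset by blast
  have small: "Z x y \<Longrightarrow> x \<in> S \<Longrightarrow> y \<in> S \<Longrightarrow> x \<in> B \<or> y \<in> B" for x y
  proof -
    assume a: "Z x y" "x \<in> S" "y \<in> S"
    show ?thesis
    proof (cases "x \<subseteq> y")
      case True
      then have "Z x x" using mono[of x x x y] a by blast
      then show ?thesis using a unfolding B_def by blast
    next
      case False
      then have "y \<subseteq> x" using tot a by blast
      then have "Z y y" using mono[of y y x y] a sym by blast
      then show ?thesis using a unfolding B_def by blast
    qed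
  qed
  have Bcl: "is_clique E B"
    unfolding is_clique_def E
  proof (intro ballI impI conjI)
    fix x y assume xy: "x \<in> B" "y \<in> B" "x \<noteq> y"
    show "x \<noteq> y" by fact
    show "Z x y"
    proof (cases "x \<subseteq> y")
      case True
      then show ?thesis using mono[of x y y y] xy BS unfolding B_def by blast
    next
      case False
      then have "y \<subseteq> x" using tot xy BS by blast
      then show ?thesis using mono[of x y x x] xy BS unfolding B_def by blast
    qed
  qed
  show ?thesis
  proof (cases "B = {}")
    case True
    show ?thesis
    proof (cases "S = {}")
      case True
      show ?thesis
        by (rule clique_eq_chrom[of S E 0 "\<lambda>_. 0" "{}"]) (auto simp: True is_colouring_def is_clique_def)
    next
      case False
      then obtain s where s: "s \<in> S" by blast
      have col: "is_colouring S E 1 (\<lambda>_. 0)"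
        unfolding is_colouring_def E using small \<open>B = {}\<close> by auto
      show ?thesis
        by (rule clique_eq_chrom[OF fin col, of "{s}"]) (auto simp: s is_clique_def)
    qed
  next
    case False
    obtain m where m: "m \<in> B" "\<And>b. b \<in> B \<Longrightarrow> m \<subseteq> b \<Longrightarrow> m = b"
      using finite_has_maximal[OF finB False] by blast
    have mmax: "b \<subseteq> m" if "b \<in> B" for b
      using tot[of b m] m that BS by blast
    obtain c where c: "bij_betw c B {0..<card B}" using ex_bij_betw_finite_nat[OF finB] by blast
    have cinj: "inj_on c B" and cB: "\<And>x. x \<in> B \<Longrightarrow> c x < card B"
      using c unfolding bij_betw_def by auto
    define f where "f x = (if x \<in> B then c x else if Z x m then card B else c m)" for x
    have fB: "f x = c x" if "x \<in> B" for x using that by (simp add: f_def)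
    have fy1: "f y = card B" if "y \<notin> B" "Z y m" for y using that by (simp add: f_def)
    have fy2: "f y = c m" if "y \<notin> B" "\<not> Z y m" for y using that by (simp add: f_def)
    have case1: "f x \<noteq> f y" if "x \<in> B" "y \<notin> B" "Z y x" for x y
    proof (cases "Z y m")
      case True
      have "c x < card B" by (rule cB[OF that(1)])
      thus ?thesis using fB[OF that(1)] fy1[OF that(2) True] by simp
    next
      case False
      then have "x \<noteq> m" using that(3) by blast
      then have "c x \<noteq> c m" using inj_on_eq_iff[OF cinj that(1) m(1)] by simp
      thus ?thesis using fB[OF that(1)] fy2[OF that(2) False] by simp
    qed
    have adj: "f x \<noteq> f y" if "x \<in> S" "y \<in> S" "x \<noteq> y" "Z x y" for x y
    proof (cases "x \<in> B")
      case xB: True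
      show ?thesis
      proof (cases "y \<in> B")
        case True
        then have "c x \<noteq> c y" using inj_on_eq_iff[OF cinj xB True] that(3) by simp
        then show ?thesis using fB[OF xB] fB[OF True] by simp
      next
        case False
        have "Z y x" by (rule sym[OF that(1,2,4)])
        then show ?thesis using case1[OF xB False] by simp
      qed
    next
      case xB: False
      then have yB: "y \<in> B" using small[OF that(4,1,2)] by blast
      show ?thesis using case1[OF yB xB that(4)] by simp
    qed
    show ?thesis
    proof (cases "\<exists>s\<in>S - B. Z s m")
      case True
      then obtain s where s: "s \<in> S" "s \<notin> B" "Z s m" by blast
      have rng: "f ` S \<subseteq> {..<card B + 1}"
      proof
        fix z assume "z \<in> f ` S"
        then obtain x where x: "x \<in> S" "z = f x" by blast
        have "f x < card B + 1"
        proof (cases "x \<in> B")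
          case True thus ?thesis using fB cB by fastforce
        next
          case nB: False
          show ?thesis
          proof (cases "Z x m")
            case True thus ?thesis using fy1[OF nB] by simp
          next
            case False thus ?thesis using fy2[OF nB] cB[OF m(1)] by simp
          qed
        qed
        thus "z \<in> {..<card B + 1}" using x by simp
      qed
      have col: "is_colouring S E (card B + 1) f"
        unfolding is_colouring_def E using rng adj by blast
      have cl: "is_clique E (insert s B)"
        unfolding is_clique_def
      proof (intro ballI impI)
        fix x y assume xy: "x \<in> insert s B" "y \<in> insert s B" "x \<noteq> y"
        have sb: "Z s b" if "b \<in> B" for b
          using mono[of s b s m] s that BS m(1) mmax by blast
        show "E x y"
          using xy Bcl sb sym s BS unfolding is_clique_def E by auto
      qed
      show ?thesis
        by (rule clique_eq_chrom[OF fin col _ cl]) (use s BS finB in auto)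
    next
      case False
      have rng: "f ` S \<subseteq> {..<card B}"
      proof
        fix z assume "z \<in> f ` S"
        then obtain x where x: "x \<in> S" "z = f x" by blast
        have "f x < card B"
        proof (cases "x \<in> B")
          case True thus ?thesis using fB cB by fastforce
        next
          case nB: False
          have "\<not> Z x m" using False nB x(1) by blast
          thus ?thesis using fy2[OF nB] cB[OF m(1)] by simp
        qed
        thus "z \<in> {..<card B}" using x by simp
      qed
      have col: "is_colouring S E (card B) f"
        unfolding is_colouring_def E using rng adj by blast
      show ?thesis
        by (rule clique_eq_chrom[OF fin col BS Bcl]) simp
    qed
  qed
qed

lemma primepow_dvd_chain:
  fixes p :: nat and d1 d2 :: int
  assumes "prime p" "d1 \<ge> 0" "d2 \<ge> 0" "d1 dvd int (p ^ a)" "d2 dvd int (p ^ a)"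
  shows "d1 dvd d2 \<or> d2 dvd d1"
proof -
  have "nat d1 dvd p ^ a" using assms
    by (metis int_dvd_int_iff int_nat_eq)
  then obtain i where i: "nat d1 = p ^ i" using divides_primepow_nat[OF assms(1)] by blast
  have "nat d2 dvd p ^ a" using assms
    by (metis int_dvd_int_iff int_nat_eq)
  then obtain j where j: "nat d2 = p ^ j" using divides_primepow_nat[OF assms(1)] by blast
  have "nat d1 dvd nat d2 \<or> nat d2 dvd nat d1"
    using i j by (metis le_imp_power_dvd nat_le_linear)
  thus ?thesis using assms(2,3)
    by (metis int_dvd_int_iff int_nat_eq)
qed

lemma res_divides_aux:
  fixes n x y :: int
  assumes "0 \<le> y" "y < n" "gcd x n dvd y"
  shows "\<exists>r. 0 \<le> r \<and> r < n \<and> y = (x * r) mod n"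
proof -
  obtain u v where uv: "u * x + v * n = gcd x n" using bezout_int by blast
  obtain t where t: "y = gcd x n * t" using assms(3) by (auto elim: dvdE)
  have "y = t * (u * x + v * n)" using uv t by simp
  hence "y = (u * t) * x + (v * t) * n" by (simp add: algebra_simps)
  hence "y mod n = (x * (u * t)) mod n" by (simp add: algebra_simps)
  also have "\<dots> = (x * ((u * t) mod n)) mod n" by (simp add: mod_mult_right_eq)
  finally have "y = (x * ((u * t) mod n)) mod n" using assms(1,2) by simp
  moreover have "0 \<le> (u * t) mod n" "(u * t) mod n < n" using assms by auto
  ultimately show ?thesis by blast
qed

context
  fixes p a :: nat
  assumes p: "prime p" and a: "a \<ge> 1"
begin

lemma n_gt1: "int (p ^ a) > 1"
proof -
  have "p > 1" using p prime_gt_1_nat by blast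
  hence "p ^ a > 1" using a by (intro one_less_power) auto
  hence "int (p ^ a) > int 1" by (simp only: of_nat_less_iff)
  thus ?thesis by simp
qed

interpretation R: residues "int (p ^ a)" "residue_ring (int (p ^ a))"
  by unfold_locales (rule n_gt1)

lemma res_divides:
  assumes "x \<in> carrier (residue_ring (int (p ^ a)))" "y \<in> carrier (residue_ring (int (p ^ a)))"
  shows "(\<exists>r\<in>carrier (residue_ring (int (p ^ a))). y = x \<otimes>\<^bsub>residue_ring (int (p ^ a))\<^esub> r)
       \<or> (\<exists>r\<in>carrier (residue_ring (int (p ^ a))). x = y \<otimes>\<^bsub>residue_ring (int (p ^ a))\<^esub> r)"
proof -
  define n where "n = int (p ^ a)"
  have car: "carrier (residue_ring n) = {0..n - 1}" unfolding n_def by (rule R.res_carrier_eq)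
  have mul: "u \<otimes>\<^bsub>residue_ring n\<^esub> v = (u * v) mod n" for u v unfolding n_def by (rule R.res_mult_eq)
  have xy: "0 \<le> x" "x < n" "0 \<le> y" "y < n" using assms unfolding n_def[symmetric] car by auto
  have "gcd x n dvd gcd y n \<or> gcd y n dvd gcd x n"
    unfolding n_def by (rule primepow_dvd_chain[OF p]) auto
  hence "gcd x n dvd y \<or> gcd y n dvd x" using dvd_trans gcd_dvd1 by blast
  hence "(\<exists>r\<in>carrier (residue_ring n). y = x \<otimes>\<^bsub>residue_ring n\<^esub> r)
       \<or> (\<exists>r\<in>carrier (residue_ring n). x = y \<otimes>\<^bsub>residue_ring n\<^esub> r)"
  proof
    assume "gcd x n dvd y"
    then obtain r where "0 \<le> r" "r < n" "y = (x * r) mod n" using res_divides_aux xy by blast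
    hence "r \<in> carrier (residue_ring n)" "y = x \<otimes>\<^bsub>residue_ring n\<^esub> r" unfolding car mul by auto
    thus ?thesis by blast
  next
    assume "gcd y n dvd x"
    then obtain r where "0 \<le> r" "r < n" "x = (y * r) mod n" using res_divides_aux xy by blast
    hence "r \<in> carrier (residue_ring n)" "x = y \<otimes>\<^bsub>residue_ring n\<^esub> r" unfolding car mul by auto
    thus ?thesis by blast
  qed
  thus ?thesis unfolding n_def .
qed

lemma ideal_chain:
  assumes "ideal I (residue_ring (int (p ^ a)))" "ideal J (residue_ring (int (p ^ a)))"
  shows "I \<subseteq> J \<or> J \<subseteq> I"
proof (rule ccontr)
  assume "\<not> ?thesis"
  then obtain x y where xy: "x \<in> I" "x \<notin> J" "y \<in> J" "y \<notin> I" by blast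
  have c: "x \<in> carrier (residue_ring (int (p ^ a)))" "y \<in> carrier (residue_ring (int (p ^ a)))"
    using ideal.Icarr[OF assms(1) xy(1)] ideal.Icarr[OF assms(2) xy(3)] by auto
  from res_divides[OF c] show False
  proof
    assume "\<exists>r\<in>carrier (residue_ring (int (p ^ a))). y = x \<otimes>\<^bsub>residue_ring (int (p ^ a))\<^esub> r"
    then obtain r where r: "r \<in> carrier (residue_ring (int (p ^ a)))" "y = x \<otimes>\<^bsub>residue_ring (int (p ^ a))\<^esub> r" by blast
    have "x \<otimes>\<^bsub>residue_ring (int (p ^ a))\<^esub> r \<in> I" by (rule ideal.I_r_closed[OF assms(1) xy(1) r(1)])
    thus False using r(2) xy(4) by simp
  next
    assume "\<exists>r\<in>carrier (residue_ring (int (p ^ a))). x = y \<otimes>\<^bsub>residue_ring (int (p ^ a))\<^esub> r"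
    then obtain r where r: "r \<in> carrier (residue_ring (int (p ^ a)))" "x = y \<otimes>\<^bsub>residue_ring (int (p ^ a))\<^esub> r" by blast
    have "y \<otimes>\<^bsub>residue_ring (int (p ^ a))\<^esub> r \<in> J" by (rule ideal.I_r_closed[OF assms(2) xy(3) r(1)])
    thus False using r(2) xy(2) by simp
  qed
qed

lemma ideal_prod_mono_aux:
  assumes "I \<subseteq> I'" "J \<subseteq> J'"
  shows "ideal_prod R I J \<subseteq> ideal_prod R I' J'"
proof
  fix s assume "s \<in> ideal_prod R I J"
  thus "s \<in> ideal_prod R I' J'"
    by (induct s rule: ideal_prod.induct) (use assms in \<open>auto intro: ideal_prod.intros\<close>)
qed

lemma main:
  "perfect_graph (AG_vertices (residue_ring (int (p ^ a)))) (AG_adj (residue_ring (int (p ^ a))))"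
  unfolding perfect_graph_def
proof (intro allI impI)
  let ?R = "residue_ring (int (p ^ a))"
  fix S assume S: "S \<subseteq> AG_vertices ?R"
  have id: "ideal I ?R" if "I \<in> S" for I using S that unfolding AG_vertices_def by auto
  have finC: "finite (carrier ?R)" using R.res_carrier_eq by simp
  have "S \<subseteq> Pow (carrier ?R)"
  proof
    fix I assume "I \<in> S"
    thus "I \<in> Pow (carrier ?R)" using ideal.Icarr[OF id[OF \<open>I \<in> S\<close>]] by auto
  qed
  moreover have "finite (Pow (carrier ?R))" using finC by simp
  ultimately have fin: "finite S" by (rule finite_subset)
  show "clique_number S (AG_adj ?R) = chromatic_number S (AG_adj ?R)"
  proof (rule threshold_perfect[OF fin, where Z = "\<lambda>I J. ideal_prod ?R I J = {\<zero>\<^bsub>?R\<^esub>}"])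
    show "x \<subseteq> y \<or> y \<subseteq> x" if "x \<in> S" "y \<in> S" for x y
      by (rule ideal_chain[OF id[OF that(1)] id[OF that(2)]])
    show "ideal_prod ?R y x = {\<zero>\<^bsub>?R\<^esub>}" if "x \<in> S" "y \<in> S" "ideal_prod ?R x y = {\<zero>\<^bsub>?R\<^esub>}" for x y
      using that(3) R.ideal_prod_commute[OF id[OF that(1)] id[OF that(2)]] by simp
    show "ideal_prod ?R x y = {\<zero>\<^bsub>?R\<^esub>}"
      if "x \<in> S" "y \<in> S" "x' \<in> S" "y' \<in> S" "x \<subseteq> x'" "y \<subseteq> y'" "ideal_prod ?R x' y' = {\<zero>\<^bsub>?R\<^esub>}"
      for x y x' y'
    proof -
      have "ideal (ideal_prod ?R x y) ?R" by (rule R.ideal_prod_is_ideal[OF id[OF that(1)] id[OF that(2)]])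
      hence "\<zero>\<^bsub>?R\<^esub> \<in> ideal_prod ?R x y" by (simp add: additive_subgroup.zero_closed ideal.axioms(1))
      moreover have "ideal_prod ?R x y \<subseteq> ideal_prod ?R x' y'"
        by (rule ideal_prod_mono_aux[OF that(5,6)])
      ultimately show ?thesis using that(7) by auto
    qed
    show "AG_adj ?R x y = (x \<noteq> y \<and> ideal_prod ?R x y = {\<zero>\<^bsub>?R\<^esub>})" for x y
      unfolding AG_adj_def by simp
  qed
qed

end

theorem lemma8:
  fixes p \<alpha> :: nat
  assumes "prime p" and "\<alpha> \<ge> 1"
  shows "perfect_graph (AG_vertices (residue_ring (int (p ^ \<alpha>))))
                       (AG_adj (residue_ring (int (p ^ \<alpha>))))"
  using main[OF assms] .

end
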